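(* Let $\rho$ be a state of $n$ finite-dimensional systems $1,\dots,n$, and let $\Sigma=\{k_1,k_2,\dots\}\subseteq\{1,\dots,n\}$ be nonempty. For each $k\in\Sigma$ let $\mathcal B_k=\{|a^{(k)}_{i}\rangle\}_i$ be an orthonormal basis of system $k$, and for multi-indices $\vec i=(i_{k_1},i_{k_2},\dots)$, $\vec j=(j_{k_1},j_{k_2},\dots)$ let $\rho_{\vec i\vec j}=\big(\langle a^{(k_1)}_{i_{k_1}}|\langle a^{(k_2)}_{i_{k_2}}|\cdots\big)\rho\big(|a^{(k_1)}_{j_{k_1}}\rangle|a^{(k_2)}_{j_{k_2}}\rangle\cdots\big)$, an operator on the systems not in $\Sigma$ (a scalar if $\Sigma=\{1,\dots,n\}$). Then $$Q^\Sigma_{\mathcal N}(\rho)=\min_{\bigotimes_{k\in\Sigma}\mathcal B_k}\frac12\Big(\sum_{\vec i,\vec j}\|\rho_{\vec i\vec j}\|_1-1\Big),$$ the minimum being over all choices of the bases $\mathcal B_k$, $k\in\Sigma$.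
   Context: $\|\cdot\|_1$ is the trace norm. Negativity of a bipartite state $\tau_{X:Y}$: $\mathcal N_{X:Y}(\tau)=(\|\tau^\Gamma\|_1-1)/2$, with $\tau^\Gamma$ the partial transpose with respect to one party. For a system $k$ of dimension $m$ with orthonormal basis $\{|a^{(k)}_i\rangle\}$, the measurement interaction is the isometry $V_k:k\to k\otimes k'$ ($k'$ an $m$-dimensional apparatus with computational basis $\{|i\rangle\}$), $V_k|a^{(k)}_i\rangle=|a^{(k)}_i\rangle|i\rangle$. The pre-measurement state is $\tilde\rho=(\bigotimes_{k\in\Sigma}V_k)\rho(\bigotimes_{k\in\Sigma}V_k)^\dagger$ on the systems $1,\dots,n$ together with the apparatuses $\Sigma'=\{k':k\in\Sigma\}$. The negativity of quantumness on $\Sigma$ is $Q^\Sigma_{\mathcal N}(\rho)=\min\mathcal N_{\{1,\dots,n\}:\Sigma'}(\tilde\rho)$ over all choices of bases of the systems in $\Sigma$. *)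

theory Defs
  imports "Jordan_Normal_Form.Matrix" "Jordan_Normal_Form.Char_Poly"
          "Jordan_Normal_Form.Schur_Decomposition"
          "HOL-Computational_Algebra.Computational_Algebra"
begin

text \<open>An operator on the sites S is a function
  cfg => cfg => complex, read as its matrix in the computational product basis.\<close>

definition cfgs :: "(nat \<Rightarrow> nat) \<Rightarrow> nat set \<Rightarrow> (nat \<Rightarrow> nat) set" where
  "cfgs d S = {f. (\<forall>k\<in>S. f k < d k) \<and> (\<forall>k. k \<notin> S \<longrightarrow> f k = 0)}"

text \<open>Matrix of an operator on a finite index set, via some enumeration of the index set
  (the trace norm does not depend on the enumeration).\<close>
definition op_to_mat :: "'a set \<Rightarrow> ('a \<Rightarrow> 'a \<Rightarrow> complex) \<Rightarrow> complex mat" where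
  "op_to_mat I A = (let e = (SOME e. bij_betw e {..<card I} I)
                    in mat (card I) (card I) (\<lambda>(i, j). A (e i) (e j)))"

text \<open>Trace norm tr sqrt(M^dagger M) = sum of the square roots of the eigenvalues
  (with multiplicity) of M^dagger M.\<close>
definition trace_norm_mat :: "complex mat \<Rightarrow> real" where
  "trace_norm_mat M = sum_mset (image_mset (\<lambda>l. sqrt (Re l)) (proots (char_poly (mat_adjoint M * M))))"

definition trace_norm :: "'a set \<Rightarrow> ('a \<Rightarrow> 'a \<Rightarrow> complex) \<Rightarrow> real" where
  "trace_norm I A = trace_norm_mat (op_to_mat I A)"

definition partial_transpose :: "nat set \<Rightarrow> ((nat \<Rightarrow> nat) \<Rightarrow> (nat \<Rightarrow> nat) \<Rightarrow> complex)
    \<Rightarrow> (nat \<Rightarrow> nat) \<Rightarrow> (nat \<Rightarrow> nat) \<Rightarrow> complex" where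
  "partial_transpose Y \<tau> g h = \<tau> (\<lambda>k. if k \<in> Y then h k else g k) (\<lambda>k. if k \<in> Y then g k else h k)"

definition negativity :: "(nat \<Rightarrow> nat) set \<Rightarrow> nat set
    \<Rightarrow> ((nat \<Rightarrow> nat) \<Rightarrow> (nat \<Rightarrow> nat) \<Rightarrow> complex) \<Rightarrow> real" where
  "negativity I Y \<tau> = (trace_norm I (partial_transpose Y \<tau>) - 1) / 2"

definition is_state :: "'a set \<Rightarrow> ('a \<Rightarrow> 'a \<Rightarrow> complex) \<Rightarrow> bool" where
  "is_state I \<rho> \<longleftrightarrow>
     (\<forall>v :: 'a \<Rightarrow> complex.
        (\<Sum>x\<in>I. \<Sum>y\<in>I. cnj (v x) * \<rho> x y * v y) \<in> \<real> \<and>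
        Re (\<Sum>x\<in>I. \<Sum>y\<in>I. cnj (v x) * \<rho> x y * v y) \<ge> 0)
     \<and> (\<Sum>x\<in>I. \<rho> x x) = 1"

text \<open>B k i x = <x|a_i^(k)>: the x-th component of the i-th basis vector of system k.
  B k is an orthonormal basis of C^(d k) for every k in Sigma.\<close>
definition onb :: "nat \<Rightarrow> (nat \<Rightarrow> nat \<Rightarrow> complex) \<Rightarrow> bool" where
  "onb m b \<longleftrightarrow> (\<forall>i<m. \<forall>j<m. (\<Sum>x<m. cnj (b i x) * b j x) = (if i = j then 1 else 0))"

definition bases :: "(nat \<Rightarrow> nat) \<Rightarrow> nat set \<Rightarrow> (nat \<Rightarrow> nat \<Rightarrow> nat \<Rightarrow> complex) set" where
  "bases d \<Sigma> = {B. \<forall>k\<in>\<Sigma>. onb (d k) (B k)}"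

text \<open>Systems are 1..n; the apparatus k' of system k is the site n + k, of dimension d k.\<close>
definition ext_dim :: "nat \<Rightarrow> (nat \<Rightarrow> nat) \<Rightarrow> nat \<Rightarrow> nat" where
  "ext_dim n d k = (if k \<le> n then d k else d (k - n))"

definition app_sites :: "nat \<Rightarrow> nat set \<Rightarrow> nat set" where
  "app_sites n \<Sigma> = (\<lambda>k. n + k) ` \<Sigma>"

text \<open>Matrix element <g| (tensor_{k in Sigma} V_k) |x>, with g a configuration of systems and
  apparatuses and x a configuration of the systems; V_k |a_i> = |a_i>|i>.\<close>
definition meas_iso :: "nat \<Rightarrow> nat set \<Rightarrow> (nat \<Rightarrow> nat \<Rightarrow> nat \<Rightarrow> complex)
    \<Rightarrow> (nat \<Rightarrow> nat) \<Rightarrow> (nat \<Rightarrow> nat) \<Rightarrow> complex" where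
  "meas_iso n \<Sigma> B g x =
     (\<Prod>k\<in>\<Sigma>. B k (g (n + k)) (g k) * cnj (B k (g (n + k)) (x k)))
     * (if \<forall>k\<in>{1..n} - \<Sigma>. g k = x k then 1 else 0)"

definition premeas :: "nat \<Rightarrow> (nat \<Rightarrow> nat) \<Rightarrow> nat set \<Rightarrow> (nat \<Rightarrow> nat \<Rightarrow> nat \<Rightarrow> complex)
    \<Rightarrow> ((nat \<Rightarrow> nat) \<Rightarrow> (nat \<Rightarrow> nat) \<Rightarrow> complex) \<Rightarrow> (nat \<Rightarrow> nat) \<Rightarrow> (nat \<Rightarrow> nat) \<Rightarrow> complex" where
  "premeas n d \<Sigma> B \<rho> g h =
     (\<Sum>x\<in>cfgs d {1..n}. \<Sum>y\<in>cfgs d {1..n}.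
        meas_iso n \<Sigma> B g x * \<rho> x y * cnj (meas_iso n \<Sigma> B h y))"

text \<open>Negativity of quantumness on Sigma (the minimum over bases, written as an infimum).\<close>
definition QN :: "nat \<Rightarrow> (nat \<Rightarrow> nat) \<Rightarrow> nat set
    \<Rightarrow> ((nat \<Rightarrow> nat) \<Rightarrow> (nat \<Rightarrow> nat) \<Rightarrow> complex) \<Rightarrow> real" where
  "QN n d \<Sigma> \<rho> = (INF B\<in>bases d \<Sigma>.
      negativity (cfgs (ext_dim n d) ({1..n} \<union> app_sites n \<Sigma>)) (app_sites n \<Sigma>)
                 (premeas n d \<Sigma> B \<rho>))"

definition block :: "nat \<Rightarrow> (nat \<Rightarrow> nat) \<Rightarrow> nat set \<Rightarrow> (nat \<Rightarrow> nat \<Rightarrow> nat \<Rightarrow> complex)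
    \<Rightarrow> ((nat \<Rightarrow> nat) \<Rightarrow> (nat \<Rightarrow> nat) \<Rightarrow> complex)
    \<Rightarrow> (nat \<Rightarrow> nat) \<Rightarrow> (nat \<Rightarrow> nat) \<Rightarrow> (nat \<Rightarrow> nat) \<Rightarrow> (nat \<Rightarrow> nat) \<Rightarrow> complex" where
  "block n d \<Sigma> B \<rho> i j u v =
     (\<Sum>s\<in>cfgs d \<Sigma>. \<Sum>t\<in>cfgs d \<Sigma>.
        cnj (\<Prod>k\<in>\<Sigma>. B k (i k) (s k))
        * \<rho> (\<lambda>k. if k \<in> \<Sigma> then s k else u k) (\<lambda>k. if k \<in> \<Sigma> then t k else v k)
        * (\<Prod>k\<in>\<Sigma>. B k (j k) (t k)))"

end

theory Submission
  imports Defs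
begin


definition enum :: "'a set \<Rightarrow> nat \<Rightarrow> 'a" where
  "enum I = (SOME e. bij_betw e {..<card I} I)"

lemma enum_bij: "finite I \<Longrightarrow> bij_betw (enum I) {..<card I} I"
  using ex_bij_betw_nat_finite[of I] unfolding enum_def atLeast0LessThan by (metis someI_ex)

definition mate :: "(nat \<Rightarrow> 'a) \<Rightarrow> (nat \<Rightarrow> 'b) \<Rightarrow> nat \<Rightarrow> nat \<Rightarrow> ('a \<Rightarrow> 'b \<Rightarrow> complex) \<Rightarrow> complex mat" where
  "mate e f n m A = mat n m (\<lambda>(i,j). A (e i) (f j))"

definition opm :: "'b set \<Rightarrow> ('a \<Rightarrow> 'b \<Rightarrow> complex) \<Rightarrow> ('b \<Rightarrow> 'c \<Rightarrow> complex) \<Rightarrow> 'a \<Rightarrow> 'c \<Rightarrow> complex" where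
  "opm J A B = (\<lambda>x z. \<Sum>y\<in>J. A x y * B y z)"

definition adj :: "('a \<Rightarrow> 'b \<Rightarrow> complex) \<Rightarrow> 'b \<Rightarrow> 'a \<Rightarrow> complex" where
  "adj A = (\<lambda>x y. cnj (A y x))"

definition tnf :: "complex poly \<Rightarrow> real" where
  "tnf p = sum_mset (image_mset (\<lambda>l. sqrt (Re l)) (proots p))"

lemma op_to_mat_mate: "op_to_mat I A = mate (enum I) (enum I) (card I) (card I) A"
  unfolding op_to_mat_def mate_def enum_def Let_def ..

lemma mate_carrier[simp]: "mate e f n m A \<in> carrier_mat n m"
  by (simp add: mate_def)

lemma mate_dims[simp]: "dim_row (mate e f n m A) = n" "dim_col (mate e f n m A) = m"
  by (simp_all add: mate_def)

lemma mate_index[simp]: "i < n \<Longrightarrow> j < m \<Longrightarrow> mate e f n m A $$ (i,j) = A (e i) (f j)"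
  by (simp add: mate_def)

lemma mate_mult: assumes g: "bij_betw g {..<m} J"
  shows "mate e h n k (opm J A B) = mate e g n m A * mate g h m k B"
proof (rule eq_matI)
  fix i j assume "i < dim_row (mate e g n m A * mate g h m k B)" "j < dim_col (mate e g n m A * mate g h m k B)"
  then have i: "i<n" "j<k" by auto
  have "mate e h n k (opm J A B) $$ (i,j) = (\<Sum>y\<in>J. A (e i) y * B y (h j))" using i by (simp add: opm_def)
  also have "\<dots> = (\<Sum>l<m. A (e i) (g l) * B (g l) (h j))"
    using sum.reindex_bij_betw[OF g, of "\<lambda>y. A (e i) y * B y (h j)"] by simp
  also have "\<dots> = (mate e g n m A * mate g h m k B) $$ (i,j)" using i
    by (simp add: scalar_prod_def atLeast0LessThan)
  finally show "mate e h n k (opm J A B) $$ (i,j) = (mate e g n m A * mate g h m k B) $$ (i,j)" .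
qed auto

lemma mat_adjoint_alt: "mat_adjoint A = mat (dim_col A) (dim_row A) (\<lambda>(i,j). cnj (A $$ (j,i)))"
  by (rule eq_matI) (auto simp: mat_adjoint_def mat_of_rows_def)

lemma mat_adjoint_dims[simp]: "dim_row (mat_adjoint A) = dim_col A" "dim_col (mat_adjoint A) = dim_row A"
  by (auto simp: mat_adjoint_def)

lemma mat_adjoint_index[simp]: "i < dim_col A \<Longrightarrow> j < dim_row A \<Longrightarrow> mat_adjoint A $$ (i,j) = cnj (A $$ (j,i))"
  by (simp add: mat_adjoint_alt)

lemma mat_adjoint_mate: "mat_adjoint (mate e f n m A) = mate f e m n (adj A)"
  by (rule eq_matI) (auto simp: adj_def)

lemma mat_adjoint_mult: fixes A B :: "complex mat" assumes "A \<in> carrier_mat n m" "B \<in> carrier_mat m k"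
  shows "mat_adjoint (A * B) = mat_adjoint B * mat_adjoint A"
proof (rule eq_matI)
  fix i j assume "i < dim_row (mat_adjoint B * mat_adjoint A)" "j < dim_col (mat_adjoint B * mat_adjoint A)"
  then have i: "i < k" "j < n" using assms by auto
  show "mat_adjoint (A * B) $$ (i, j) = (mat_adjoint B * mat_adjoint A) $$ (i, j)"
  proof -
    have "mat_adjoint (A * B) $$ (i, j) = cnj (\<Sum>l = 0..<m. A $$ (j,l) * B $$ (l,i))"
      using i assms by (simp add: scalar_prod_def)
    also have "\<dots> = (\<Sum>l = 0..<m. cnj (B $$ (l,i)) * cnj (A $$ (j,l)))"
      by (simp add: cnj_sum mult.commute)
    also have "\<dots> = (mat_adjoint B * mat_adjoint A) $$ (i, j)"
      using i assms by (simp add: scalar_prod_def)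
    finally show ?thesis .
  qed
qed (use assms in auto)

lemma mate_cong: assumes "\<And>i j. i < n \<Longrightarrow> j < m \<Longrightarrow> A (e i) (f j) = B (e i) (f j)"
  shows "mate e f n m A = mate e f n m B"
  using assms by (intro eq_matI) auto

lemma mate_id: assumes e: "bij_betw e {..<n} I"
  and A: "\<And>x y. x \<in> I \<Longrightarrow> y \<in> I \<Longrightarrow> A x y = (if x = y then 1 else 0)"
  shows "mate e e n n A = 1\<^sub>m n"
proof (rule eq_matI)
  fix i j assume "i < dim_row (1\<^sub>m n)" "j < dim_col (1\<^sub>m n)"
  then have i: "i < n" "j < n" by auto
  have "e i \<in> I" "e j \<in> I" using e i by (auto simp: bij_betw_def)
  moreover have "e i = e j \<longleftrightarrow> i = j" using e i by (auto simp: bij_betw_def inj_on_def)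
  ultimately show "mate e e n n A $$ (i, j) = 1\<^sub>m n $$ (i, j)" using i A by auto
qed auto

lemma trace_norm_cp: assumes "finite I"
  shows "trace_norm I A = tnf (char_poly (mate (enum I) (enum I) (card I) (card I) (opm I (adj A) A)))"
  unfolding trace_norm_def trace_norm_mat_def tnf_def op_to_mat_mate mat_adjoint_mate
  by (subst mate_mult[OF enum_bij[OF assms]]) simp


definition cpo :: "'a set \<Rightarrow> ('a \<Rightarrow> 'a \<Rightarrow> complex) \<Rightarrow> complex poly" where
  "cpo I X = char_poly (mate (enum I) (enum I) (card I) (card I) X)"

lemma trace_norm_cpo: "finite I \<Longrightarrow> trace_norm I A = tnf (cpo I (opm I (adj A) A))"
  unfolding cpo_def by (rule trace_norm_cp)

lemma opm_delta_left: assumes "finite I" "x \<in> I" shows "opm I (\<lambda>x y. if x = y then 1 else 0) B x z = B x z"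
proof -
  have "opm I (\<lambda>x y. if x = y then 1 else 0) B x z = (\<Sum>y\<in>I. if x = y then B y z else 0)"
    unfolding opm_def by (rule sum.cong) auto
  then show ?thesis using assms by simp
qed

lemma opm_delta_right: assumes "finite I" "z \<in> I" shows "opm I B (adj (\<lambda>x y. if x = y then 1 else 0)) x z = B x z"
proof -
  have "opm I B (adj (\<lambda>x y. if x = y then 1 else 0)) x z = (\<Sum>y\<in>I. if z = y then B x y else 0)"
    unfolding opm_def adj_def by (rule sum.cong) auto
  then show ?thesis using assms by simp
qed

lemma cp_enum_indep: assumes fI: "finite I" and e: "bij_betw e {..<card I} I"
  shows "char_poly (mate e e (card I) (card I) X) = cpo I X"
proof -
  define N where "N = card I"
  define eI where "eI = enum I"
  have bI: "bij_betw eI {..<N} I" using enum_bij[OF fI] by (simp add: eI_def N_def)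
  have e': "bij_betw e {..<N} I" using e by (simp add: N_def)
  have eI_in: "\<And>i. i < N \<Longrightarrow> e i \<in> I" using e' by (auto simp: bij_betw_def)
  define U :: "'a \<Rightarrow> 'a \<Rightarrow> complex" where "U = (\<lambda>x y. if x = y then 1 else 0)"
  define MU where "MU = mate e eI N N U"
  define MH where "MH = mate eI e N N (adj U)"
  define MX where "MX = mate eI eI N N X"
  have "MU * MH = mate e e N N (opm I U (adj U))"
    unfolding MU_def MH_def by (rule mate_mult[OF bI, symmetric])
  also have "\<dots> = 1\<^sub>m N"
    by (rule mate_id[OF e']) (auto simp: U_def opm_delta_left fI adj_def)
  finally have UH: "MU * MH = 1\<^sub>m N" .
  have HU: "MH * MU = 1\<^sub>m N"
    by (rule mat_mult_left_right_inverse[OF _ _ UH]) (auto simp: MU_def MH_def)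
  have "mate e e N N X = mate e e N N (opm I U (opm I X (adj U)))"
    by (rule mate_cong) (simp add: eI_in U_def opm_delta_left opm_delta_right fI)
  also have "\<dots> = MU * (MX * MH)"
    unfolding MU_def MX_def MH_def by (simp add: mate_mult[OF bI])
  also have "\<dots> = MU * MX * MH"
    by (rule assoc_mult_mat[symmetric, of _ N N _ N _ N]) (auto simp: MU_def MX_def MH_def)
  finally have eq: "mate e e N N X = MU * MX * MH" .
  have "similar_mat (mate e e N N X) MX"
    using UH HU eq by (intro similar_matI[of _ _ MU MH N]) (auto simp: MU_def MX_def MH_def)
  from char_poly_similar[OF this] show ?thesis
    by (simp add: cpo_def MX_def eI_def N_def)
qed

lemma cpo_reindex: assumes fI: "finite I" and f: "bij_betw f K I"
  shows "cpo K (\<lambda>x y. X (f x) (f y)) = cpo I X"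
proof -
  have fK: "finite K" using f fI bij_betw_finite by blast
  have c: "card K = card I" using f bij_betw_same_card by blast
  have b: "bij_betw (f \<circ> enum K) {..<card I} I"
    using bij_betw_trans[OF enum_bij[OF fK] f] c by simp
  have "cpo K (\<lambda>x y. X (f x) (f y)) = char_poly (mate (f \<circ> enum K) (f \<circ> enum K) (card I) (card I) X)"
    by (simp add: cpo_def mate_def c)
  also have "\<dots> = cpo I X" by (rule cp_enum_indep[OF fI b])
  finally show ?thesis .
qed

lemma cpo_cong: assumes "finite I" "\<And>x y. x \<in> I \<Longrightarrow> y \<in> I \<Longrightarrow> X x y = Y x y"
  shows "cpo I X = cpo I Y"
proof -
  have "\<And>i. i < card I \<Longrightarrow> enum I i \<in> I" using enum_bij[OF assms(1)] by (auto simp: bij_betw_def)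
  then show ?thesis unfolding cpo_def using assms(2) by (subst mate_cong) auto
qed

lemma cp_four_block: fixes A D :: "complex mat"
  assumes A: "A \<in> carrier_mat n n" and D: "D \<in> carrier_mat m m"
  shows "char_poly (four_block_mat A (0\<^sub>m n m) (0\<^sub>m m n) D) = char_poly A * char_poly D"
proof -
  have "char_poly_matrix (four_block_mat A (0\<^sub>m n m) (0\<^sub>m m n) D)
      = four_block_mat (char_poly_matrix A) (0\<^sub>m n m) (0\<^sub>m m n) (char_poly_matrix D)"
    by (rule eq_matI) (insert A D, auto simp: char_poly_matrix_def)
  then show ?thesis unfolding char_poly_def
    by (simp add: det_four_block_mat_upper_right_zero[of _ n _ m] A D)
qed

lemma bij_shift: fixes n1 n2 :: nat shows "bij_betw (\<lambda>i. i - n1) {n1..<n1+n2} {..<n2}"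
  by (rule bij_betw_byWitness[where f'="\<lambda>i. i + n1"]) (auto simp: image_subset_iff)

lemma cpo_direct_sum: assumes f1: "finite I1" and f2: "finite I2" and disj: "I1 \<inter> I2 = {}"
  and z1: "\<And>x y. x \<in> I1 \<Longrightarrow> y \<in> I2 \<Longrightarrow> X x y = 0"
  and z2: "\<And>x y. x \<in> I2 \<Longrightarrow> y \<in> I1 \<Longrightarrow> X x y = 0"
  shows "cpo (I1 \<union> I2) X = cpo I1 X * cpo I2 X"
proof -
  define n1 n2 where "n1 = card I1" "n2 = card I2"
  define e1 e2 where "e1 = enum I1" "e2 = enum I2"
  have b1: "bij_betw e1 {..<n1} I1" using enum_bij[OF f1] by (simp add: n1_n2_def e1_e2_def)
  have b2: "bij_betw e2 {..<n2} I2" using enum_bij[OF f2] by (simp add: n1_n2_def e1_e2_def)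
  define e where "e = (\<lambda>i. if i < n1 then e1 i else e2 (i - n1))"
  have c: "card (I1 \<union> I2) = n1 + n2" using card_Un_disjoint[OF f1 f2 disj] by (simp add: n1_n2_def)
  have be1: "bij_betw e {..<n1} I1"
    using b1 by (rule bij_betw_cong[THEN iffD1, rotated]) (auto simp: e_def)
  have be2: "bij_betw e {n1..<n1+n2} I2"
  proof -
    have "bij_betw (e2 \<circ> (\<lambda>i. i - n1)) {n1..<n1+n2} I2" by (rule bij_betw_trans[OF bij_shift b2])
    then show ?thesis by (rule bij_betw_cong[THEN iffD1, rotated]) (auto simp: e_def)
  qed
  have be: "bij_betw e {..<card (I1 \<union> I2)} (I1 \<union> I2)"
  proof -
    have "bij_betw e ({..<n1} \<union> {n1..<n1+n2}) (I1 \<union> I2)" by (rule bij_betw_combine[OF be1 be2 disj])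
    moreover have "{..<n1} \<union> {n1..<n1+n2} = {..<card (I1 \<union> I2)}" using c by auto
    ultimately show ?thesis by simp
  qed
  have in1: "\<And>i. i < n1 \<Longrightarrow> e1 i \<in> I1" using b1 by (auto simp: bij_betw_def)
  have in2: "\<And>i. i < n2 \<Longrightarrow> e2 i \<in> I2" using b2 by (auto simp: bij_betw_def)
  have M: "mate e e (n1+n2) (n1+n2) X = four_block_mat (mate e1 e1 n1 n1 X) (0\<^sub>m n1 n2) (0\<^sub>m n2 n1) (mate e2 e2 n2 n2 X)"
    by (rule eq_matI) (auto simp: e_def z1 z2 in1 in2)
  have "cpo (I1 \<union> I2) X = char_poly (mate e e (n1+n2) (n1+n2) X)"
    using cp_enum_indep[OF _ be] f1 f2 c by simp
  also have "\<dots> = char_poly (mate e1 e1 n1 n1 X) * char_poly (mate e2 e2 n2 n2 X)"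
    unfolding M by (rule cp_four_block) auto
  also have "\<dots> = cpo I1 X * cpo I2 X" by (simp add: cpo_def n1_n2_def e1_e2_def)
  finally show ?thesis .
qed

lemma cpo_nonzero: "cpo I X \<noteq> 0"
proof -
  have "coeff (cpo I X) (card I) = 1" unfolding cpo_def
    using degree_monic_char_poly[of "mate (enum I) (enum I) (card I) (card I) X" "card I"] by simp
  then show ?thesis by auto
qed

lemma cpo_empty: "cpo {} X = 1"
proof -
  have "degree (cpo {} X) = 0 \<and> coeff (cpo {} X) 0 = 1" unfolding cpo_def
    using degree_monic_char_poly[of "mate (enum {}) (enum {}) 0 0 X" 0] by simp
  then show ?thesis by (metis degree_0_id one_pCons pCons_0_0)
qed

lemma cpo_blockdiag: assumes "finite P" "finite J"
  and "\<And>p v p' v'. p \<in> P \<Longrightarrow> p' \<in> P \<Longrightarrow> v \<in> J \<Longrightarrow> v' \<in> J \<Longrightarrow> p \<noteq> p' \<Longrightarrow> X (p,v) (p',v') = 0"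
  shows "cpo (P \<times> J) X = (\<Prod>p\<in>P. cpo J (\<lambda>v v'. X (p,v) (p,v')))"
  using assms
proof (induction P rule: finite_induct)
  case empty
  then show ?case by (simp add: cpo_empty)
next
  case (insert p P)
  have eq: "insert p P \<times> J = ({p} \<times> J) \<union> (P \<times> J)" by auto
  have "cpo (insert p P \<times> J) X = cpo ({p} \<times> J) X * cpo (P \<times> J) X"
    unfolding eq by (rule cpo_direct_sum) (use insert in auto)
  moreover have "cpo ({p} \<times> J) X = cpo J (\<lambda>v v'. X (p,v) (p,v'))"
  proof -
    have "bij_betw (\<lambda>v. (p,v)) J ({p} \<times> J)" by (rule bij_betw_byWitness[where f'=snd]) auto
    from cpo_reindex[OF _ this, of X] insert.prems show ?thesis by simp
  qed
  moreover have "cpo (P \<times> J) X = (\<Prod>p\<in>P. cpo J (\<lambda>v v'. X (p,v) (p,v')))"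
    by (rule insert.IH) (use insert in auto)
  ultimately show ?case using insert by simp
qed

lemma tnf_mult: "p \<noteq> 0 \<Longrightarrow> q \<noteq> 0 \<Longrightarrow> tnf (p * q) = tnf p + tnf q"
  by (simp add: tnf_def proots_mult)

lemma tnf_prod_cpo: "finite P \<Longrightarrow> tnf (\<Prod>p\<in>P. cpo J (X p)) = (\<Sum>p\<in>P. tnf (cpo J (X p)))"
proof (induction P rule: finite_induct)
  case empty then show ?case by (simp add: tnf_def)
next
  case (insert p P)
  have "(\<Prod>p\<in>P. cpo J (X p)) \<noteq> 0" by (simp add: prod_zero_iff insert cpo_nonzero)
  then show ?case using insert by (simp add: tnf_mult cpo_nonzero)
qed

lemma trace_norm_blockdiag: assumes fP: "finite P" and fJ: "finite J"
  and D: "\<And>p v p' v'. p \<in> P \<Longrightarrow> p' \<in> P \<Longrightarrow> v \<in> J \<Longrightarrow> v' \<in> J \<Longrightarrow> D (p,v) (p',v') = (if p = p' then Y p v v' else 0)"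
  shows "trace_norm (P \<times> J) D = (\<Sum>p\<in>P. trace_norm J (Y p))"
proof -
  define X where "X = opm (P \<times> J) (adj D) D"
  have Xv: "X (p,v) (p',v') = (if p = p' then opm J (adj (Y p)) (Y p) v v' else 0)"
    if "p \<in> P" "p' \<in> P" "v \<in> J" "v' \<in> J" for p v p' v'
  proof -
    have "X (p,v) (p',v') = (\<Sum>q\<in>P. \<Sum>w\<in>J. cnj (D (q,w) (p,v)) * D (q,w) (p',v'))"
      by (simp add: X_def opm_def adj_def sum.cartesian_product)
    also have "\<dots> = (\<Sum>q\<in>P. if q = p \<and> q = p' then (\<Sum>w\<in>J. cnj (Y p w v) * Y p w v') else 0)"
      by (intro sum.cong refl) (use that in \<open>auto simp: D\<close>)
    also have "\<dots> = (if p = p' then opm J (adj (Y p)) (Y p) v v' else 0)"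
    proof (cases "p = p'")
      case True then show ?thesis using that fP by (simp add: opm_def adj_def)
    next
      case False then show ?thesis by (intro trans[OF sum.neutral]) auto
    qed
    finally show ?thesis .
  qed
  have "trace_norm (P \<times> J) D = tnf (cpo (P \<times> J) X)"
    unfolding X_def by (rule trace_norm_cpo) (use fP fJ in simp)
  also have "cpo (P \<times> J) X = (\<Prod>p\<in>P. cpo J (\<lambda>v v'. X (p,v) (p,v')))"
    by (rule cpo_blockdiag[OF fP fJ]) (simp add: Xv)
  also have "\<dots> = (\<Prod>p\<in>P. cpo J (opm J (adj (Y p)) (Y p)))"
    by (intro prod.cong refl cpo_cong fJ) (simp add: Xv)
  also have "tnf \<dots> = (\<Sum>p\<in>P. tnf (cpo J (opm J (adj (Y p)) (Y p))))"
    by (rule tnf_prod_cpo[OF fP])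
  also have "\<dots> = (\<Sum>p\<in>P. trace_norm J (Y p))"
    using trace_norm_cpo[OF fJ] by simp
  finally show ?thesis .
qed


lemma tn_LDR:
  fixes L :: "'a \<Rightarrow> 'b \<Rightarrow> complex" and D :: "'b \<Rightarrow> 'b \<Rightarrow> complex" and R :: "'b \<Rightarrow> 'a \<Rightarrow> complex"
  assumes fI: "finite I" and fK: "finite K" and card: "card K = card I"
    and LL: "\<And>x y. x \<in> K \<Longrightarrow> y \<in> K \<Longrightarrow> opm I (adj L) L x y = (if x = y then 1 else 0)"
    and RR: "\<And>x y. x \<in> K \<Longrightarrow> y \<in> K \<Longrightarrow> opm I R (adj R) x y = (if x = y then 1 else 0)"
    and A: "\<And>x y. x \<in> I \<Longrightarrow> y \<in> I \<Longrightarrow> A x y = opm K L (opm K D R) x y"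
  shows "trace_norm I A = trace_norm K D"
proof -
  define N where "N = card I"
  define eI eK where "eI = enum I" "eK = enum K"
  have bI: "bij_betw eI {..<N} I" using enum_bij[OF fI] by (simp add: eI_eK_def N_def)
  have bK: "bij_betw eK {..<N} K" using enum_bij[OF fK] card by (simp add: eI_eK_def N_def)
  have inI: "\<And>i. i < N \<Longrightarrow> eI i \<in> I" using bI by (auto simp: bij_betw_def)
  define LM DM RM where "LM = mate eI eK N N L" "DM = mate eK eK N N D" "RM = mate eK eI N N R"
  have cL: "LM \<in> carrier_mat N N" and cD: "DM \<in> carrier_mat N N" and cR: "RM \<in> carrier_mat N N"
    by (simp_all add: LM_DM_RM_def)
  have M: "op_to_mat I A = LM * (DM * RM)"
  proof -
    have "op_to_mat I A = mate eI eI N N A" by (simp add: op_to_mat_mate eI_eK_def N_def)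
    also have "\<dots> = mate eI eI N N (opm K L (opm K D R))" by (rule mate_cong) (simp add: inI A)
    also have "\<dots> = LM * (DM * RM)" by (simp add: LM_DM_RM_def mate_mult[OF bK])
    finally show ?thesis .
  qed
  have LL': "mat_adjoint LM * LM = 1\<^sub>m N"
  proof -
    have "mat_adjoint LM * LM = mate eK eK N N (opm I (adj L) L)"
      by (simp add: LM_DM_RM_def mat_adjoint_mate mate_mult[OF bI])
    also have "\<dots> = 1\<^sub>m N" by (rule mate_id[OF bK]) (simp add: LL)
    finally show ?thesis .
  qed
  have RR': "RM * mat_adjoint RM = 1\<^sub>m N"
  proof -
    have "RM * mat_adjoint RM = mate eK eK N N (opm I R (adj R))"
      by (simp add: LM_DM_RM_def mat_adjoint_mate mate_mult[OF bI])
    also have "\<dots> = 1\<^sub>m N" by (rule mate_id[OF bK]) (simp add: RR)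
    finally show ?thesis .
  qed
  have cRa: "mat_adjoint RM \<in> carrier_mat N N" by (rule carrier_matI) (simp_all add: LM_DM_RM_def)
  have cDa: "mat_adjoint DM \<in> carrier_mat N N" by (rule carrier_matI) (simp_all add: LM_DM_RM_def)
  have cLa: "mat_adjoint LM \<in> carrier_mat N N" by (rule carrier_matI) (simp_all add: LM_DM_RM_def)
  have RR2: "mat_adjoint RM * RM = 1\<^sub>m N"
    by (rule mat_mult_left_right_inverse[OF cR cRa RR'])
  have adjM: "mat_adjoint (LM * (DM * RM)) = mat_adjoint RM * mat_adjoint DM * mat_adjoint LM"
  proof -
    have "mat_adjoint (LM * (DM * RM)) = mat_adjoint (DM * RM) * mat_adjoint LM"
      by (rule mat_adjoint_mult[OF cL mult_carrier_mat[OF cD cR]])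
    also have "mat_adjoint (DM * RM) = mat_adjoint RM * mat_adjoint DM"
      by (rule mat_adjoint_mult[OF cD cR])
    finally show ?thesis .
  qed
  have key: "mat_adjoint (op_to_mat I A) * op_to_mat I A = mat_adjoint RM * (mat_adjoint DM * DM) * RM"
  proof -
    let ?a = "mat_adjoint RM" and ?b = "mat_adjoint DM" and ?c = "mat_adjoint LM"
    have cDR: "DM * RM \<in> carrier_mat N N" using cD cR by simp
    have cab: "?a * ?b \<in> carrier_mat N N" using cRa cDa by simp
    have "mat_adjoint (op_to_mat I A) * op_to_mat I A = ((?a * ?b) * ?c) * (LM * (DM * RM))"
      unfolding M adjM ..
    also have "\<dots> = (?a * ?b) * (?c * (LM * (DM * RM)))"
      by (rule assoc_mult_mat[OF cab cLa mult_carrier_mat[OF cL cDR]])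
    also have "?c * (LM * (DM * RM)) = (?c * LM) * (DM * RM)"
      by (rule assoc_mult_mat[symmetric, OF cLa cL cDR])
    also have "\<dots> = DM * RM" unfolding LL' by (rule left_mult_one_mat[OF cDR])
    also have "(?a * ?b) * (DM * RM) = ?a * (?b * (DM * RM))"
      by (rule assoc_mult_mat[OF cRa cDa cDR])
    also have "?b * (DM * RM) = (?b * DM) * RM"
      by (rule assoc_mult_mat[symmetric, OF cDa cD cR])
    also have "?a * ((?b * DM) * RM) = (?a * (?b * DM)) * RM"
      by (rule assoc_mult_mat[symmetric, OF cRa mult_carrier_mat[OF cDa cD] cR])
    finally show ?thesis .
  qed
  have sim: "similar_mat (mat_adjoint (op_to_mat I A) * op_to_mat I A) (mat_adjoint DM * DM)"
  proof -
    have c1: "mat_adjoint RM * (mat_adjoint DM * DM) * RM \<in> carrier_mat N N"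
      by (rule mult_carrier_mat[OF mult_carrier_mat[OF cRa mult_carrier_mat[OF cDa cD]] cR])
    have c2: "mat_adjoint DM * DM \<in> carrier_mat N N" by (rule mult_carrier_mat[OF cDa cD])
    show ?thesis
      unfolding key by (rule similar_matI[of _ _ "mat_adjoint RM" RM N]) (use c1 c2 cR cRa RR' RR2 in simp_all)
  qed
  have "trace_norm K D = trace_norm_mat DM"
    by (simp add: trace_norm_def op_to_mat_mate LM_DM_RM_def eI_eK_def N_def card)
  then show ?thesis
    unfolding trace_norm_def trace_norm_mat_def char_poly_similar[OF sim] by simp
qed




definition rs :: "nat set \<Rightarrow> (nat \<Rightarrow> nat) \<Rightarrow> nat \<Rightarrow> nat" where
  "rs S g = (\<lambda>k. if k \<in> S then g k else 0)"
definition apr :: "nat \<Rightarrow> nat set \<Rightarrow> (nat \<Rightarrow> nat) \<Rightarrow> nat \<Rightarrow> nat" where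
  "apr n S g = (\<lambda>k. if k \<in> S then g (n + k) else 0)"
definition mk2 :: "nat set \<Rightarrow> (nat \<Rightarrow> nat) \<Rightarrow> (nat \<Rightarrow> nat) \<Rightarrow> nat \<Rightarrow> nat" where
  "mk2 S s u = (\<lambda>k. if k \<in> S then s k else u k)"
definition mk3 :: "nat \<Rightarrow> nat set \<Rightarrow> (nat \<Rightarrow> nat) \<times> (nat \<Rightarrow> nat) \<times> (nat \<Rightarrow> nat) \<Rightarrow> nat \<Rightarrow> nat" where
  "mk3 n S = (\<lambda>(s,u,c) k. if k \<le> n then (if k \<in> S then s k else u k) else c (k - n))"
definition Aop :: "nat set \<Rightarrow> (nat \<Rightarrow> nat \<Rightarrow> nat \<Rightarrow> complex) \<Rightarrow> (nat \<Rightarrow> nat) \<Rightarrow> (nat \<Rightarrow> nat) \<Rightarrow> complex" where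
  "Aop S B a s = (\<Prod>k\<in>S. B k (a k) (s k))"

lemma cfgs_finite: assumes fS: "finite S" shows "finite (cfgs d S)"
proof -
  have "cfgs d S \<subseteq> (\<lambda>f k. if k \<in> S then f k else 0) ` PiE S (\<lambda>k. {..<d k})"
  proof
    fix g assume g: "g \<in> cfgs d S"
    then have "g = (\<lambda>k. if k \<in> S then restrict g S k else 0)" by (auto simp: cfgs_def fun_eq_iff)
    moreover have "restrict g S \<in> PiE S (\<lambda>k. {..<d k})" using g by (auto simp: cfgs_def)
    ultimately show "g \<in> (\<lambda>f k. if k \<in> S then f k else 0) ` PiE S (\<lambda>k. {..<d k})" by blast
  qed
  then show ?thesis by (rule finite_subset) (use fS in \<open>auto intro: finite_PiE\<close>)
qed

lemma sum_cfgs_prod: assumes "finite S"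
  shows "(\<Sum>s\<in>cfgs d S. \<Prod>k\<in>S. f k (s k)) = (\<Prod>k\<in>S. \<Sum>x<d k. (f k x :: complex))"
proof -
  have b: "bij_betw (\<lambda>g k. if k \<in> S then g k else 0) (PiE S (\<lambda>k. {..<d k})) (cfgs d S)"
  proof (rule bij_betw_byWitness[where f'="\<lambda>g. restrict g S"])
    show "\<forall>a\<in>PiE S (\<lambda>k. {..<d k}). restrict (\<lambda>k. if k \<in> S then a k else 0) S = a"
    proof
      fix a assume a: "a \<in> PiE S (\<lambda>k. {..<d k})"
      have "restrict (\<lambda>k. if k \<in> S then a k else 0) S = restrict a S"
        by (rule restrict_ext) simp
      also have "\<dots> = a" using a by (rule PiE_restrict)
      finally show "restrict (\<lambda>k. if k \<in> S then a k else 0) S = a" .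
    qed
    show "\<forall>a'\<in>cfgs d S. (\<lambda>k. if k \<in> S then restrict a' S k else 0) = a'"
      by (auto simp: cfgs_def fun_eq_iff)
    show "(\<lambda>g k. if k \<in> S then g k else 0) ` PiE S (\<lambda>k. {..<d k}) \<subseteq> cfgs d S"
      by (auto simp: cfgs_def)
    show "(\<lambda>g. restrict g S) ` cfgs d S \<subseteq> PiE S (\<lambda>k. {..<d k})"
      by (auto simp: cfgs_def)
  qed
  have "(\<Prod>k\<in>S. \<Sum>x<d k. f k x) = (\<Sum>g\<in>PiE S (\<lambda>k. {..<d k}). \<Prod>k\<in>S. f k (g k))"
    by (rule prod_sum_PiE) (use assms in auto)
  also have "\<dots> = (\<Sum>g\<in>PiE S (\<lambda>k. {..<d k}). \<Prod>k\<in>S. f k (if k \<in> S then g k else 0))"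
    by (intro sum.cong prod.cong) auto
  also have "\<dots> = (\<Sum>s\<in>cfgs d S. \<Prod>k\<in>S. f k (s k))"
    using sum.reindex_bij_betw[OF b, of "\<lambda>s. \<Prod>k\<in>S. f k (s k)"] by simp
  finally show ?thesis ..
qed

lemma Aop_orth: assumes fS: "finite S" and B: "\<forall>k\<in>S. onb (d k) (B k)"
  and a: "a \<in> cfgs d S" and a': "a' \<in> cfgs d S"
  shows "(\<Sum>s\<in>cfgs d S. cnj (Aop S B a s) * Aop S B a' s) = (if a = a' then 1 else 0)"
proof -
  have "(\<Sum>s\<in>cfgs d S. cnj (Aop S B a s) * Aop S B a' s)
      = (\<Sum>s\<in>cfgs d S. \<Prod>k\<in>S. cnj (B k (a k) (s k)) * B k (a' k) (s k))"
    by (simp add: Aop_def cnj_prod prod.distrib)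
  also have "\<dots> = (\<Prod>k\<in>S. \<Sum>x<d k. cnj (B k (a k) x) * B k (a' k) x)" by (rule sum_cfgs_prod[OF fS])
  also have "\<dots> = (\<Prod>k\<in>S. if a k = a' k then 1 else 0)"
    by (rule prod.cong) (use B a a' in \<open>auto simp: onb_def cfgs_def\<close>)
  also have "\<dots> = (if a = a' then 1 else 0)"
  proof (cases "a = a'")
    case True then show ?thesis by simp
  next
    case False
    then obtain k where ne: "a k \<noteq> a' k" by auto
    have k: "k \<in> S"
    proof (rule ccontr)
      assume "k \<notin> S"
      then have "a k = 0" "a' k = 0" using a a' by (auto simp: cfgs_def)
      with ne show False by simp
    qed
    then show ?thesis using False fS ne by (auto simp: prod_zero_iff)
  qed
  finally show ?thesis .
qed

lemma meas_iso_cf: "meas_iso n \<Sigma> B g x = Aop \<Sigma> B (apr n \<Sigma> g) (rs \<Sigma> g) * cnj (Aop \<Sigma> B (apr n \<Sigma> g) (rs \<Sigma> x))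
   * (if rs ({1..n} - \<Sigma>) g = rs ({1..n} - \<Sigma>) x then 1 else 0)"
proof -
  have "(\<forall>k\<in>{1..n} - \<Sigma>. g k = x k) \<longleftrightarrow> rs ({1..n} - \<Sigma>) g = rs ({1..n} - \<Sigma>) x"
    by (auto simp: rs_def fun_eq_iff)
  moreover have "(\<Prod>k\<in>\<Sigma>. B k (g (n + k)) (g k) * cnj (B k (g (n + k)) (x k)))
      = Aop \<Sigma> B (apr n \<Sigma> g) (rs \<Sigma> g) * cnj (Aop \<Sigma> B (apr n \<Sigma> g) (rs \<Sigma> x))"
  proof -
    have "Aop \<Sigma> B (apr n \<Sigma> g) (rs \<Sigma> g) * cnj (Aop \<Sigma> B (apr n \<Sigma> g) (rs \<Sigma> x))
       = (\<Prod>k\<in>\<Sigma>. B k (apr n \<Sigma> g k) (rs \<Sigma> g k)) * (\<Prod>k\<in>\<Sigma>. cnj (B k (apr n \<Sigma> g k) (rs \<Sigma> x k)))"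
      unfolding Aop_def cnj_prod ..
    also have "\<dots> = (\<Prod>k\<in>\<Sigma>. B k (apr n \<Sigma> g k) (rs \<Sigma> g k) * cnj (B k (apr n \<Sigma> g k) (rs \<Sigma> x k)))"
      by (rule prod.distrib[symmetric])
    also have "\<dots> = (\<Prod>k\<in>\<Sigma>. B k (g (n + k)) (g k) * cnj (B k (g (n + k)) (x k)))"
      by (rule prod.cong) (simp_all add: apr_def rs_def)
    finally show ?thesis by simp
  qed
  ultimately show ?thesis unfolding meas_iso_def by simp
qed


definition Lop :: "nat \<Rightarrow> nat set \<Rightarrow> nat set \<Rightarrow> (nat \<Rightarrow> nat \<Rightarrow> nat \<Rightarrow> complex) \<Rightarrow> (nat \<Rightarrow> nat)
   \<Rightarrow> ((nat \<Rightarrow> nat) \<times> (nat \<Rightarrow> nat)) \<times> (nat \<Rightarrow> nat) \<Rightarrow> complex" where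
  "Lop n S R B g q = (case q of ((b,a),u) \<Rightarrow>
     Aop S B b (rs S g) * (if apr n S g = a then 1 else 0) * (if rs R g = u then 1 else 0))"

definition Dop :: "nat \<Rightarrow> (nat \<Rightarrow> nat) \<Rightarrow> nat set \<Rightarrow> (nat \<Rightarrow> nat \<Rightarrow> nat \<Rightarrow> complex)
   \<Rightarrow> ((nat \<Rightarrow> nat) \<Rightarrow> (nat \<Rightarrow> nat) \<Rightarrow> complex)
   \<Rightarrow> ((nat \<Rightarrow> nat) \<times> (nat \<Rightarrow> nat)) \<times> (nat \<Rightarrow> nat) \<Rightarrow> ((nat \<Rightarrow> nat) \<times> (nat \<Rightarrow> nat)) \<times> (nat \<Rightarrow> nat) \<Rightarrow> complex" where
  "Dop n d S B \<rho> q q' = (case q of ((b,a),u) \<Rightarrow> case q' of ((b',a'),v) \<Rightarrow>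
     if (b,a) = (b',a') then block n d S B \<rho> b a u v else 0)"

definition Rop :: "nat \<Rightarrow> nat set \<Rightarrow> nat set \<Rightarrow> (nat \<Rightarrow> nat \<Rightarrow> nat \<Rightarrow> complex)
   \<Rightarrow> ((nat \<Rightarrow> nat) \<times> (nat \<Rightarrow> nat)) \<times> (nat \<Rightarrow> nat) \<Rightarrow> (nat \<Rightarrow> nat) \<Rightarrow> complex" where
  "Rop n S R B q h = (case q of ((b,a),v) \<Rightarrow>
     cnj (Aop S B a (rs S h)) * (if apr n S h = b then 1 else 0) * (if rs R h = v then 1 else 0))"

lemma Dop_eq: "Dop n d S B \<rho> (p,v) (p',v') = (if p = p' then (case p of (b,a) \<Rightarrow> block n d S B \<rho> b a) v v' else 0)"
  by (cases p; cases p') (simp add: Dop_def)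

lemma sum2_delta: assumes "finite B2" "finite C2" "y \<in> B2" "z \<in> C2"
  shows "(\<Sum>b\<in>B2. \<Sum>c\<in>C2. if b = y \<and> c = z then G else 0) = G"
proof -
  have "\<And>b. (\<Sum>c\<in>C2. if b = y \<and> c = z then G else 0) = (if b = y then G else 0)"
    by (case_tac "b = y") (use assms in simp_all)
  then show ?thesis using assms by simp
qed

lemma sum3_delta: assumes "finite A" "finite B2" "finite C2" "x \<in> A" "y \<in> B2" "z \<in> C2"
  shows "(\<Sum>a\<in>A. \<Sum>b\<in>B2. \<Sum>c\<in>C2. if a = x \<and> b = y \<and> c = z then G else 0) = G"
proof -
  have "\<And>a. (\<Sum>b\<in>B2. \<Sum>c\<in>C2. if a = x \<and> b = y \<and> c = z then G else 0) = (if a = x then G else 0)"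
    by (case_tac "a = x") (use assms sum2_delta in simp_all)
  then show ?thesis using assms by simp
qed

lemma sum_K: "(\<Sum>q\<in>(A \<times> B2) \<times> C2. f q) = (\<Sum>b\<in>A. \<Sum>a\<in>B2. \<Sum>u\<in>C2. f ((b,a),u))"
proof -
  have "(\<Sum>p\<in>A \<times> B2. \<Sum>u\<in>C2. f (p,u)) = (\<Sum>(p,u)\<in>(A \<times> B2) \<times> C2. f (p,u))"
    by (rule sum.cartesian_product)
  then have 1: "(\<Sum>q\<in>(A \<times> B2) \<times> C2. f q) = (\<Sum>p\<in>A \<times> B2. \<Sum>u\<in>C2. f (p,u))" by simp
  have 2: "(\<Sum>b\<in>A. \<Sum>a\<in>B2. (\<lambda>p. \<Sum>u\<in>C2. f (p,u)) (b,a)) = (\<Sum>(b,a)\<in>A \<times> B2. (\<lambda>p. \<Sum>u\<in>C2. f (p,u)) (b,a))"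
    by (rule sum.cartesian_product)
  show ?thesis unfolding 1 using 2 by simp
qed

context
  fixes n :: nat and d :: "nat \<Rightarrow> nat" and \<Sigma> :: "nat set" and N1 R :: "nat set"
  assumes N1: "N1 = {1..n}" and R: "R = N1 - \<Sigma>" and Sig: "\<Sigma> \<subseteq> N1"
begin

lemma finN: "finite N1" unfolding N1 by simp
lemma finS: "finite \<Sigma>" using Sig finite_subset finN by blast

lemma finC: "finite (cfgs d \<Sigma>)" by (rule cfgs_finite[OF finS])
lemma finJ: "finite (cfgs d R)" by (rule cfgs_finite) (use finN R in simp)

lemma rs_mk2: assumes "s \<in> cfgs d \<Sigma>" "u \<in> cfgs d R"
  shows "rs \<Sigma> (mk2 \<Sigma> s u) = s" "rs R (mk2 \<Sigma> s u) = u"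
  using assms R by (auto simp: rs_def mk2_def cfgs_def fun_eq_iff)

lemma bij_mk2: "bij_betw (\<lambda>(s,u). mk2 \<Sigma> s u) (cfgs d \<Sigma> \<times> cfgs d R) (cfgs d N1)"
proof (rule bij_betw_byWitness[where f'="\<lambda>x. (rs \<Sigma> x, rs R x)"])
  show "\<forall>a\<in>cfgs d \<Sigma> \<times> cfgs d R. (rs \<Sigma> ((\<lambda>(s,u). mk2 \<Sigma> s u) a), rs R ((\<lambda>(s,u). mk2 \<Sigma> s u) a)) = a"
    using rs_mk2 by auto
  show "\<forall>a'\<in>cfgs d N1. (\<lambda>(s,u). mk2 \<Sigma> s u) (rs \<Sigma> a', rs R a') = a'"
    using Sig R by (auto simp: rs_def mk2_def cfgs_def fun_eq_iff)
  show "(\<lambda>(s,u). mk2 \<Sigma> s u) ` (cfgs d \<Sigma> \<times> cfgs d R) \<subseteq> cfgs d N1"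
    using Sig R by (auto simp: mk2_def cfgs_def)
  show "(\<lambda>x. (rs \<Sigma> x, rs R x)) ` cfgs d N1 \<subseteq> cfgs d \<Sigma> \<times> cfgs d R"
    using Sig R by (auto simp: rs_def cfgs_def)
qed

lemma sum_X: "(\<Sum>x\<in>cfgs d N1. F x) = (\<Sum>s\<in>cfgs d \<Sigma>. \<Sum>u\<in>cfgs d R. F (mk2 \<Sigma> s u))"
proof -
  have "(\<Sum>x\<in>cfgs d N1. F x) = (\<Sum>p\<in>cfgs d \<Sigma> \<times> cfgs d R. F ((\<lambda>(s,u). mk2 \<Sigma> s u) p))"
    using sum.reindex_bij_betw[OF bij_mk2, of F] by simp
  also have "\<dots> = (\<Sum>s\<in>cfgs d \<Sigma>. \<Sum>u\<in>cfgs d R. F (mk2 \<Sigma> s u))"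
    by (simp add: sum.cartesian_product split_beta)
  finally show ?thesis .
qed

lemma sum_X_delta: assumes r: "r \<in> cfgs d R"
  shows "(\<Sum>x\<in>cfgs d N1. if rs R x = r then F x else 0) = (\<Sum>t\<in>cfgs d \<Sigma>. F (mk2 \<Sigma> t r))"
proof -
  have "(\<Sum>x\<in>cfgs d N1. if rs R x = r then F x else 0)
     = (\<Sum>t\<in>cfgs d \<Sigma>. \<Sum>u\<in>cfgs d R. if u = r then F (mk2 \<Sigma> t u) else 0)"
    unfolding sum_X by (intro sum.cong refl) (simp add: rs_mk2)
  also have "\<dots> = (\<Sum>t\<in>cfgs d \<Sigma>. F (mk2 \<Sigma> t r))"
    using r finJ by (simp add: sum.delta)
  finally show ?thesis .
qed


lemma premeas_cf: assumes g: "rs R g \<in> cfgs d R" and h: "rs R h \<in> cfgs d R"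
  shows "premeas n d \<Sigma> B \<rho> g h = Aop \<Sigma> B (apr n \<Sigma> g) (rs \<Sigma> g) * cnj (Aop \<Sigma> B (apr n \<Sigma> h) (rs \<Sigma> h))
     * block n d \<Sigma> B \<rho> (apr n \<Sigma> g) (apr n \<Sigma> h) (rs R g) (rs R h)"
proof -
  define Ag Ah where "Ag = Aop \<Sigma> B (apr n \<Sigma> g)" "Ah = Aop \<Sigma> B (apr n \<Sigma> h)"
  define rg rh where "rg = rs R g" "rh = rs R h"
  have mi: "\<And>f x. meas_iso n \<Sigma> B f x = Aop \<Sigma> B (apr n \<Sigma> f) (rs \<Sigma> f) * cnj (Aop \<Sigma> B (apr n \<Sigma> f) (rs \<Sigma> x))
       * (if rs R f = rs R x then 1 else 0)"
    unfolding R N1 by (rule meas_iso_cf)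
  have hr: "rh \<in> cfgs d R" and gr: "rg \<in> cfgs d R" using g h by (simp_all add: rg_rh_def)
  define S where "S = (\<lambda>x. \<Sum>t\<in>cfgs d \<Sigma>. \<rho> x (mk2 \<Sigma> t rh) * cnj (Ah (rs \<Sigma> h)) * Ah t)"
  have inner: "(\<Sum>y\<in>cfgs d N1. meas_iso n \<Sigma> B g x * \<rho> x y * cnj (meas_iso n \<Sigma> B h y))
      = meas_iso n \<Sigma> B g x * S x" for x
  proof -
    have "(\<Sum>y\<in>cfgs d N1. meas_iso n \<Sigma> B g x * \<rho> x y * cnj (meas_iso n \<Sigma> B h y))
      = meas_iso n \<Sigma> B g x * (\<Sum>y\<in>cfgs d N1. if rs R y = rh then \<rho> x y * cnj (Ah (rs \<Sigma> h)) * Ah (rs \<Sigma> y) else 0)"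
      unfolding sum_distrib_left by (intro sum.cong refl) (auto simp: mi[of h] Ag_Ah_def rg_rh_def)
    also have "\<dots> = meas_iso n \<Sigma> B g x * (\<Sum>t\<in>cfgs d \<Sigma>. \<rho> x (mk2 \<Sigma> t rh) * cnj (Ah (rs \<Sigma> h)) * Ah (rs \<Sigma> (mk2 \<Sigma> t rh)))"
      unfolding sum_X_delta[OF hr] ..
    also have "\<dots> = meas_iso n \<Sigma> B g x * S x"
      unfolding S_def by (intro arg_cong[where f="\<lambda>z. _ * z"] sum.cong refl) (simp add: rs_mk2 hr)
    finally show ?thesis .
  qed
  have "premeas n d \<Sigma> B \<rho> g h = (\<Sum>x\<in>cfgs d N1. meas_iso n \<Sigma> B g x * S x)"
    unfolding premeas_def N1[symmetric] by (simp add: inner)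
  also have "\<dots> = (\<Sum>x\<in>cfgs d N1. if rs R x = rg then Ag (rs \<Sigma> g) * cnj (Ag (rs \<Sigma> x)) * S x else 0)"
    by (intro sum.cong refl) (auto simp: mi[of g] Ag_Ah_def rg_rh_def)
  also have "\<dots> = (\<Sum>s\<in>cfgs d \<Sigma>. Ag (rs \<Sigma> g) * cnj (Ag (rs \<Sigma> (mk2 \<Sigma> s rg))) * S (mk2 \<Sigma> s rg))"
    unfolding sum_X_delta[OF gr] ..
  also have "\<dots> = (\<Sum>s\<in>cfgs d \<Sigma>. Ag (rs \<Sigma> g) * cnj (Ag s) * S (mk2 \<Sigma> s rg))"
    by (intro sum.cong refl) (simp add: rs_mk2 gr)
  also have "\<dots> = Ag (rs \<Sigma> g) * cnj (Ah (rs \<Sigma> h)) *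
      (\<Sum>s\<in>cfgs d \<Sigma>. \<Sum>t\<in>cfgs d \<Sigma>. cnj (Ag s) * \<rho> (mk2 \<Sigma> s rg) (mk2 \<Sigma> t rh) * Ah t)"
    unfolding S_def sum_distrib_left by (intro sum.cong refl) (simp add: mult_ac)
  also have "(\<Sum>s\<in>cfgs d \<Sigma>. \<Sum>t\<in>cfgs d \<Sigma>. cnj (Ag s) * \<rho> (mk2 \<Sigma> s rg) (mk2 \<Sigma> t rh) * Ah t)
     = block n d \<Sigma> B \<rho> (apr n \<Sigma> g) (apr n \<Sigma> h) rg rh"
    unfolding block_def Ag_Ah_def Ag_Ah_def Aop_def mk2_def ..
  finally show ?thesis by (simp add: Ag_Ah_def Ag_Ah_def rg_rh_def rg_rh_def)
qed

lemma notin_app: "k \<in> N1 \<Longrightarrow> k \<notin> app_sites n \<Sigma>"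
  unfolding N1 using Sig[unfolded N1] by (auto simp: app_sites_def)

lemma pt_cf: assumes g: "rs R g \<in> cfgs d R" and h: "rs R h \<in> cfgs d R"
  shows "partial_transpose (app_sites n \<Sigma>) (premeas n d \<Sigma> B \<rho>) g h
   = Aop \<Sigma> B (apr n \<Sigma> h) (rs \<Sigma> g) * cnj (Aop \<Sigma> B (apr n \<Sigma> g) (rs \<Sigma> h))
     * block n d \<Sigma> B \<rho> (apr n \<Sigma> h) (apr n \<Sigma> g) (rs R g) (rs R h)"
proof -
  define g' h' where "g' = (\<lambda>k. if k \<in> app_sites n \<Sigma> then h k else g k)"
    "h' = (\<lambda>k. if k \<in> app_sites n \<Sigma> then g k else h k)"
  have SN: "\<Sigma> \<subseteq> N1" and RN: "R \<subseteq> N1" using Sig R by auto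
  have e1: "rs \<Sigma> g' = rs \<Sigma> g" "rs \<Sigma> h' = rs \<Sigma> h"
    using notin_app SN by (auto simp: g'_h'_def rs_def fun_eq_iff)
  have e2: "rs R g' = rs R g" "rs R h' = rs R h"
    using notin_app RN by (auto simp: g'_h'_def rs_def fun_eq_iff)
  have e3: "apr n \<Sigma> g' = apr n \<Sigma> h" "apr n \<Sigma> h' = apr n \<Sigma> g"
    by (auto simp: g'_h'_def apr_def app_sites_def fun_eq_iff)
  have "partial_transpose (app_sites n \<Sigma>) (premeas n d \<Sigma> B \<rho>) g h = premeas n d \<Sigma> B \<rho> g' h'"
    unfolding partial_transpose_def g'_h'_def ..
  also have "\<dots> = Aop \<Sigma> B (apr n \<Sigma> g') (rs \<Sigma> g') * cnj (Aop \<Sigma> B (apr n \<Sigma> h') (rs \<Sigma> h'))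
     * block n d \<Sigma> B \<rho> (apr n \<Sigma> g') (apr n \<Sigma> h') (rs R g') (rs R h')"
    by (rule premeas_cf) (use e2 g h in simp_all)
  finally show ?thesis unfolding e1 e2 e3 .
qed


lemma Ib_mem: assumes g: "g \<in> cfgs (ext_dim n d) (N1 \<union> app_sites n \<Sigma>)"
  shows "rs \<Sigma> g \<in> cfgs d \<Sigma>" "rs R g \<in> cfgs d R" "apr n \<Sigma> g \<in> cfgs d \<Sigma>"
proof -
  have gb: "\<And>k. k \<in> N1 \<union> app_sites n \<Sigma> \<Longrightarrow> g k < ext_dim n d k" using g by (auto simp: cfgs_def)
  have kn: "\<And>k. k \<in> N1 \<Longrightarrow> 1 \<le> k \<and> k \<le> n" using N1 by auto
  have SN: "\<And>k. k \<in> \<Sigma> \<Longrightarrow> k \<in> N1" using Sig by auto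
  have RN: "\<And>k. k \<in> R \<Longrightarrow> k \<in> N1" using R by auto
  have ed: "\<And>k. k \<in> N1 \<Longrightarrow> ext_dim n d k = d k" using kn by (simp add: ext_dim_def)
  have gbN: "\<And>k. k \<in> N1 \<Longrightarrow> g k < d k" using gb ed by (metis UnI1)
  show "rs \<Sigma> g \<in> cfgs d \<Sigma>" unfolding cfgs_def rs_def using gbN SN by auto
  show "rs R g \<in> cfgs d R" unfolding cfgs_def rs_def using gbN RN by auto
  have "g (n + k) < d k" if k: "k \<in> \<Sigma>" for k
  proof -
    have "n + k \<in> app_sites n \<Sigma>" using k by (simp add: app_sites_def)
    then have "g (n + k) < ext_dim n d (n + k)" using gb by blast
    moreover have "1 \<le> k" using kn SN k by blast
    ultimately show ?thesis by (simp add: ext_dim_def)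
  qed
  then show "apr n \<Sigma> g \<in> cfgs d \<Sigma>" unfolding cfgs_def apr_def by auto
qed

lemma mk3_in: assumes s: "s \<in> cfgs d \<Sigma>" and u: "u \<in> cfgs d R" and c: "c \<in> cfgs d \<Sigma>"
  shows "mk3 n \<Sigma> (s,u,c) \<in> cfgs (ext_dim n d) (N1 \<union> app_sites n \<Sigma>)"
proof -
  have kn: "\<And>k. k \<in> N1 \<longleftrightarrow> 1 \<le> k \<and> k \<le> n" using N1 by auto
  have SN: "\<And>k. k \<in> \<Sigma> \<Longrightarrow> k \<in> N1" using Sig by auto
  have Rk: "\<And>k. k \<in> R \<longleftrightarrow> k \<in> N1 \<and> k \<notin> \<Sigma>" using R by auto
  have app: "\<And>k. k \<in> app_sites n \<Sigma> \<longleftrightarrow> n < k \<and> k - n \<in> \<Sigma>"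
  proof -
    fix k
    show "k \<in> app_sites n \<Sigma> \<longleftrightarrow> n < k \<and> k - n \<in> \<Sigma>"
    proof
      assume "k \<in> app_sites n \<Sigma>"
      then obtain j where j: "j \<in> \<Sigma>" "k = n + j" by (auto simp: app_sites_def)
      then have "1 \<le> j" using SN kn by blast
      then show "n < k \<and> k - n \<in> \<Sigma>" using j by simp
    next
      assume "n < k \<and> k - n \<in> \<Sigma>"
      then show "k \<in> app_sites n \<Sigma>" unfolding app_sites_def by (auto intro: image_eqI[where x="k - n"])
    qed
  qed
  have sb: "\<And>k. k \<in> \<Sigma> \<Longrightarrow> s k < d k" "\<And>k. k \<notin> \<Sigma> \<Longrightarrow> s k = 0" using s by (auto simp: cfgs_def)
  have ub: "\<And>k. k \<in> R \<Longrightarrow> u k < d k" "\<And>k. k \<notin> R \<Longrightarrow> u k = 0" using u by (auto simp: cfgs_def)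
  have cb: "\<And>k. k \<in> \<Sigma> \<Longrightarrow> c k < d k" "\<And>k. k \<notin> \<Sigma> \<Longrightarrow> c k = 0" using c by (auto simp: cfgs_def)
  have A: "mk3 n \<Sigma> (s,u,c) k < ext_dim n d k" if k: "k \<in> N1 \<union> app_sites n \<Sigma>" for k
  proof (cases "k \<le> n")
    case True
    then have "k \<in> N1" using k app by auto
    then show ?thesis using True sb ub Rk by (auto simp: mk3_def ext_dim_def)
  next
    case False
    then have "k - n \<in> \<Sigma>" using k app kn by auto
    then show ?thesis using False cb by (simp add: mk3_def ext_dim_def)
  qed
  have Z: "mk3 n \<Sigma> (s,u,c) k = 0" if k: "k \<notin> N1 \<union> app_sites n \<Sigma>" for k
  proof (cases "k \<le> n")
    case True
    then have "k \<notin> \<Sigma>" "k \<notin> R" using k SN Rk by auto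
    then show ?thesis using True sb ub by (simp add: mk3_def)
  next
    case False
    then have "k - n \<notin> \<Sigma>" using k app by auto
    then show ?thesis using False cb by (simp add: mk3_def)
  qed
  show ?thesis unfolding cfgs_def using A Z by blast
qed

lemma mk3_proj: assumes s: "s \<in> cfgs d \<Sigma>" and u: "u \<in> cfgs d R" and c: "c \<in> cfgs d \<Sigma>"
  shows "rs \<Sigma> (mk3 n \<Sigma> (s,u,c)) = s" "rs R (mk3 n \<Sigma> (s,u,c)) = u" "apr n \<Sigma> (mk3 n \<Sigma> (s,u,c)) = c"
proof -
  have kn: "\<And>k. k \<in> N1 \<longleftrightarrow> 1 \<le> k \<and> k \<le> n" using N1 by auto
  have SN: "\<And>k. k \<in> \<Sigma> \<Longrightarrow> k \<in> N1" using Sig by auto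
  have Rk: "\<And>k. k \<in> R \<longleftrightarrow> k \<in> N1 \<and> k \<notin> \<Sigma>" using R by auto
  have sb: "\<And>k. k \<notin> \<Sigma> \<Longrightarrow> s k = 0" using s by (auto simp: cfgs_def)
  have ub: "\<And>k. k \<notin> R \<Longrightarrow> u k = 0" using u by (auto simp: cfgs_def)
  have cb: "\<And>k. k \<notin> \<Sigma> \<Longrightarrow> c k = 0" using c by (auto simp: cfgs_def)
  show "rs \<Sigma> (mk3 n \<Sigma> (s,u,c)) = s"
    unfolding rs_def mk3_def fun_eq_iff using SN kn sb by auto
  show "rs R (mk3 n \<Sigma> (s,u,c)) = u"
    unfolding rs_def mk3_def fun_eq_iff using Rk kn ub by auto
  show "apr n \<Sigma> (mk3 n \<Sigma> (s,u,c)) = c"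
    unfolding apr_def mk3_def fun_eq_iff using SN kn cb by force
qed

lemma mk3_inv: assumes g: "g \<in> cfgs (ext_dim n d) (N1 \<union> app_sites n \<Sigma>)"
  shows "mk3 n \<Sigma> (rs \<Sigma> g, rs R g, apr n \<Sigma> g) = g"
proof -
  have kn: "\<And>k. k \<in> N1 \<longleftrightarrow> 1 \<le> k \<and> k \<le> n" using N1 by auto
  have SN: "\<And>k. k \<in> \<Sigma> \<Longrightarrow> k \<in> N1" using Sig by auto
  have Rk: "\<And>k. k \<in> R \<longleftrightarrow> k \<in> N1 \<and> k \<notin> \<Sigma>" using R by auto
  have gz: "\<And>k. k \<notin> N1 \<union> app_sites n \<Sigma> \<Longrightarrow> g k = 0" using g by (auto simp: cfgs_def)
  have app: "k \<in> app_sites n \<Sigma>" if "n < k" "k - n \<in> \<Sigma>" for k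
    unfolding app_sites_def by (rule image_eqI[where x="k - n"]) (use that in auto)
  have app2: "\<And>k. k \<in> app_sites n \<Sigma> \<Longrightarrow> k - n \<in> \<Sigma> \<and> n < k"
    unfolding app_sites_def using SN kn by fastforce
  show ?thesis
  proof (rule ext)
    fix k
    show "mk3 n \<Sigma> (rs \<Sigma> g, rs R g, apr n \<Sigma> g) k = g k"
    proof (cases "k \<le> n")
      case True
      have na: "k \<notin> app_sites n \<Sigma>" using app2 True by force
      show ?thesis
      proof (cases "k \<in> N1")
        case False
        then show ?thesis using True na gz SN Rk by (auto simp: mk3_def rs_def)
      qed (use True Rk in \<open>auto simp: mk3_def rs_def\<close>)
    next
      case False
      then show ?thesis using gz app2 kn by (auto simp: mk3_def apr_def)
    qed
  qed
qed

lemma bij_mk3: "bij_betw (mk3 n \<Sigma>) (cfgs d \<Sigma> \<times> cfgs d R \<times> cfgs d \<Sigma>) (cfgs (ext_dim n d) (N1 \<union> app_sites n \<Sigma>))"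
proof (rule bij_betw_byWitness[where f'="\<lambda>g. (rs \<Sigma> g, rs R g, apr n \<Sigma> g)"])
  show "\<forall>a\<in>cfgs d \<Sigma> \<times> cfgs d R \<times> cfgs d \<Sigma>. (rs \<Sigma> (mk3 n \<Sigma> a), rs R (mk3 n \<Sigma> a), apr n \<Sigma> (mk3 n \<Sigma> a)) = a"
    using mk3_proj by auto
  show "\<forall>a'\<in>cfgs (ext_dim n d) (N1 \<union> app_sites n \<Sigma>). mk3 n \<Sigma> (rs \<Sigma> a', rs R a', apr n \<Sigma> a') = a'"
    using mk3_inv by auto
  show "mk3 n \<Sigma> ` (cfgs d \<Sigma> \<times> cfgs d R \<times> cfgs d \<Sigma>) \<subseteq> cfgs (ext_dim n d) (N1 \<union> app_sites n \<Sigma>)"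
    using mk3_in by auto
  show "(\<lambda>g. (rs \<Sigma> g, rs R g, apr n \<Sigma> g)) ` cfgs (ext_dim n d) (N1 \<union> app_sites n \<Sigma>) \<subseteq> cfgs d \<Sigma> \<times> cfgs d R \<times> cfgs d \<Sigma>"
    using Ib_mem by auto
qed

lemma sum_Ib: "(\<Sum>g\<in>cfgs (ext_dim n d) (N1 \<union> app_sites n \<Sigma>). F g)
   = (\<Sum>s\<in>cfgs d \<Sigma>. \<Sum>u\<in>cfgs d R. \<Sum>c\<in>cfgs d \<Sigma>. F (mk3 n \<Sigma> (s,u,c)))"
proof -
  have "(\<Sum>g\<in>cfgs (ext_dim n d) (N1 \<union> app_sites n \<Sigma>). F g) = (\<Sum>p\<in>cfgs d \<Sigma> \<times> cfgs d R \<times> cfgs d \<Sigma>. F (mk3 n \<Sigma> p))"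
    using sum.reindex_bij_betw[OF bij_mk3, of F] by simp
  also have "\<dots> = (\<Sum>s\<in>cfgs d \<Sigma>. \<Sum>u\<in>cfgs d R. \<Sum>c\<in>cfgs d \<Sigma>. F (mk3 n \<Sigma> (s,u,c)))"
    by (simp add: sum.cartesian_product)
  finally show ?thesis .
qed


lemma LL: assumes B: "\<forall>k\<in>\<Sigma>. onb (d k) (B k)"
  and q: "q \<in> (cfgs d \<Sigma> \<times> cfgs d \<Sigma>) \<times> cfgs d R" and q': "q' \<in> (cfgs d \<Sigma> \<times> cfgs d \<Sigma>) \<times> cfgs d R"
  shows "opm (cfgs (ext_dim n d) (N1 \<union> app_sites n \<Sigma>)) (adj (Lop n \<Sigma> R B)) (Lop n \<Sigma> R B) q q'
     = (if q = q' then 1 else 0)"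
proof -
  obtain b a u where qq: "q = ((b,a),u)" and b: "b \<in> cfgs d \<Sigma>" and a: "a \<in> cfgs d \<Sigma>" and u: "u \<in> cfgs d R"
    using q by auto
  obtain b' a' u' where qq': "q' = ((b',a'),u')" and b': "b' \<in> cfgs d \<Sigma>" and a': "a' \<in> cfgs d \<Sigma>" and u': "u' \<in> cfgs d R"
    using q' by auto
  let ?Z = "\<lambda>s. cnj (Aop \<Sigma> B b s) * Aop \<Sigma> B b' s"
  let ?P = "a = a' \<and> u = u'"
  have "opm (cfgs (ext_dim n d) (N1 \<union> app_sites n \<Sigma>)) (adj (Lop n \<Sigma> R B)) (Lop n \<Sigma> R B) q q'
     = (\<Sum>s\<in>cfgs d \<Sigma>. \<Sum>w\<in>cfgs d R. \<Sum>c\<in>cfgs d \<Sigma>.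
          cnj (Lop n \<Sigma> R B (mk3 n \<Sigma> (s,w,c)) q) * Lop n \<Sigma> R B (mk3 n \<Sigma> (s,w,c)) q')"
    unfolding opm_def adj_def by (rule sum_Ib)
  also have "\<dots> = (\<Sum>s\<in>cfgs d \<Sigma>. \<Sum>w\<in>cfgs d R. \<Sum>c\<in>cfgs d \<Sigma>.
          if w = u \<and> c = a then (if ?P then ?Z s else 0) else 0)"
    by (intro sum.cong refl) (auto simp: Lop_def qq qq' mk3_proj)
  also have "\<dots> = (\<Sum>s\<in>cfgs d \<Sigma>. if ?P then ?Z s else 0)"
    by (intro sum.cong refl sum2_delta finJ finC u a)
  also have "\<dots> = (if ?P then (\<Sum>s\<in>cfgs d \<Sigma>. ?Z s) else 0)" by (cases ?P) auto
  also have "\<dots> = (if q = q' then 1 else 0)"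
    using Aop_orth[OF finS B b b'] qq qq' by auto
  finally show ?thesis .
qed

lemma RR: assumes B: "\<forall>k\<in>\<Sigma>. onb (d k) (B k)"
  and q: "q \<in> (cfgs d \<Sigma> \<times> cfgs d \<Sigma>) \<times> cfgs d R" and q': "q' \<in> (cfgs d \<Sigma> \<times> cfgs d \<Sigma>) \<times> cfgs d R"
  shows "opm (cfgs (ext_dim n d) (N1 \<union> app_sites n \<Sigma>)) (Rop n \<Sigma> R B) (adj (Rop n \<Sigma> R B)) q q'
     = (if q = q' then 1 else 0)"
proof -
  obtain b a u where qq: "q = ((b,a),u)" and b: "b \<in> cfgs d \<Sigma>" and a: "a \<in> cfgs d \<Sigma>" and u: "u \<in> cfgs d R"
    using q by auto
  obtain b' a' u' where qq': "q' = ((b',a'),u')" and b': "b' \<in> cfgs d \<Sigma>" and a': "a' \<in> cfgs d \<Sigma>" and u': "u' \<in> cfgs d R"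
    using q' by auto
  let ?Z = "\<lambda>s. cnj (Aop \<Sigma> B a s) * Aop \<Sigma> B a' s"
  let ?P = "b = b' \<and> u = u'"
  have "opm (cfgs (ext_dim n d) (N1 \<union> app_sites n \<Sigma>)) (Rop n \<Sigma> R B) (adj (Rop n \<Sigma> R B)) q q'
     = (\<Sum>s\<in>cfgs d \<Sigma>. \<Sum>w\<in>cfgs d R. \<Sum>c\<in>cfgs d \<Sigma>.
          Rop n \<Sigma> R B q (mk3 n \<Sigma> (s,w,c)) * cnj (Rop n \<Sigma> R B q' (mk3 n \<Sigma> (s,w,c))))"
    unfolding opm_def adj_def by (rule sum_Ib)
  also have "\<dots> = (\<Sum>s\<in>cfgs d \<Sigma>. \<Sum>w\<in>cfgs d R. \<Sum>c\<in>cfgs d \<Sigma>.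
          if w = u \<and> c = b then (if ?P then ?Z s else 0) else 0)"
    by (intro sum.cong refl) (auto simp: Rop_def qq qq' mk3_proj)
  also have "\<dots> = (\<Sum>s\<in>cfgs d \<Sigma>. if ?P then ?Z s else 0)"
    by (intro sum.cong refl sum2_delta finJ finC u b)
  also have "\<dots> = (if ?P then (\<Sum>s\<in>cfgs d \<Sigma>. ?Z s) else 0)" by (cases ?P) auto
  also have "\<dots> = (if q = q' then 1 else 0)"
    using Aop_orth[OF finS B a a'] qq qq' by auto
  finally show ?thesis .
qed

lemma LDR: assumes g: "g \<in> cfgs (ext_dim n d) (N1 \<union> app_sites n \<Sigma>)" and h: "h \<in> cfgs (ext_dim n d) (N1 \<union> app_sites n \<Sigma>)"
  shows "partial_transpose (app_sites n \<Sigma>) (premeas n d \<Sigma> B \<rho>) g h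
    = opm ((cfgs d \<Sigma> \<times> cfgs d \<Sigma>) \<times> cfgs d R) (Lop n \<Sigma> R B)
        (opm ((cfgs d \<Sigma> \<times> cfgs d \<Sigma>) \<times> cfgs d R) (Dop n d \<Sigma> B \<rho>) (Rop n \<Sigma> R B)) g h"
proof -
  let ?K = "(cfgs d \<Sigma> \<times> cfgs d \<Sigma>) \<times> cfgs d R"
  note gm = Ib_mem[OF g] and hm = Ib_mem[OF h]
  define ID where "ID = (\<lambda>b a u. if apr n \<Sigma> h = b then block n d \<Sigma> B \<rho> b a u (rs R h) * cnj (Aop \<Sigma> B a (rs \<Sigma> h)) else 0)"
  have inner: "opm ?K (Dop n d \<Sigma> B \<rho>) (Rop n \<Sigma> R B) ((b,a),u) h = ID b a u"
    if b: "b \<in> cfgs d \<Sigma>" and a: "a \<in> cfgs d \<Sigma>" and u: "u \<in> cfgs d R" for b a u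
  proof -
    have "opm ?K (Dop n d \<Sigma> B \<rho>) (Rop n \<Sigma> R B) ((b,a),u) h
       = (\<Sum>b'\<in>cfgs d \<Sigma>. \<Sum>a'\<in>cfgs d \<Sigma>. \<Sum>v\<in>cfgs d R. Dop n d \<Sigma> B \<rho> ((b,a),u) ((b',a'),v) * Rop n \<Sigma> R B ((b',a'),v) h)"
      unfolding opm_def by (rule sum_K)
    also have "\<dots> = (\<Sum>b'\<in>cfgs d \<Sigma>. \<Sum>a'\<in>cfgs d \<Sigma>. if b' = b \<and> a' = a then
         (\<Sum>v\<in>cfgs d R. block n d \<Sigma> B \<rho> b a u v * Rop n \<Sigma> R B ((b,a),v) h) else 0)"
      by (intro sum.cong refl) (auto simp: Dop_def)
    also have "\<dots> = (\<Sum>v\<in>cfgs d R. block n d \<Sigma> B \<rho> b a u v * Rop n \<Sigma> R B ((b,a),v) h)"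
      by (rule sum2_delta[OF finC finC b a])
    also have "\<dots> = (\<Sum>v\<in>cfgs d R. if v = rs R h then ID b a u else 0)"
      by (intro sum.cong refl) (auto simp: Rop_def ID_def)
    also have "\<dots> = ID b a u" using hm finJ by simp
    finally show ?thesis .
  qed
  have "opm ?K (Lop n \<Sigma> R B) (opm ?K (Dop n d \<Sigma> B \<rho>) (Rop n \<Sigma> R B)) g h
     = (\<Sum>b\<in>cfgs d \<Sigma>. \<Sum>a\<in>cfgs d \<Sigma>. \<Sum>u\<in>cfgs d R. Lop n \<Sigma> R B g ((b,a),u) * opm ?K (Dop n d \<Sigma> B \<rho>) (Rop n \<Sigma> R B) ((b,a),u) h)"
    unfolding opm_def[of ?K "Lop n \<Sigma> R B"] by (rule sum_K)
  also have "\<dots> = (\<Sum>b\<in>cfgs d \<Sigma>. \<Sum>a\<in>cfgs d \<Sigma>. \<Sum>u\<in>cfgs d R.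
      if b = apr n \<Sigma> h \<and> a = apr n \<Sigma> g \<and> u = rs R g then
        Aop \<Sigma> B (apr n \<Sigma> h) (rs \<Sigma> g) * cnj (Aop \<Sigma> B (apr n \<Sigma> g) (rs \<Sigma> h))
        * block n d \<Sigma> B \<rho> (apr n \<Sigma> h) (apr n \<Sigma> g) (rs R g) (rs R h) else 0)"
    by (intro sum.cong refl) (auto simp: inner Lop_def ID_def)
  also have "\<dots> = Aop \<Sigma> B (apr n \<Sigma> h) (rs \<Sigma> g) * cnj (Aop \<Sigma> B (apr n \<Sigma> g) (rs \<Sigma> h))
        * block n d \<Sigma> B \<rho> (apr n \<Sigma> h) (apr n \<Sigma> g) (rs R g) (rs R h)"
    by (rule sum3_delta[OF finC finC finJ hm(3) gm(3) gm(2)])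
  also have "\<dots> = partial_transpose (app_sites n \<Sigma>) (premeas n d \<Sigma> B \<rho>) g h"
    by (rule pt_cf[symmetric, OF gm(2) hm(2)])
  finally show ?thesis by simp
qed

lemma main_tn: assumes B: "B \<in> bases d \<Sigma>"
  shows "trace_norm (cfgs (ext_dim n d) (N1 \<union> app_sites n \<Sigma>)) (partial_transpose (app_sites n \<Sigma>) (premeas n d \<Sigma> B \<rho>))
     = (\<Sum>i\<in>cfgs d \<Sigma>. \<Sum>j\<in>cfgs d \<Sigma>. trace_norm (cfgs d R) (block n d \<Sigma> B \<rho> i j))"
proof -
  let ?I = "cfgs (ext_dim n d) (N1 \<union> app_sites n \<Sigma>)"
  let ?K = "(cfgs d \<Sigma> \<times> cfgs d \<Sigma>) \<times> cfgs d R"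
  have B': "\<forall>k\<in>\<Sigma>. onb (d k) (B k)" using B by (simp add: bases_def)
  have fK: "finite ?K" using finC finJ by simp
  have cI: "card ?I = card (cfgs d \<Sigma>) * (card (cfgs d R) * card (cfgs d \<Sigma>))"
    using bij_betw_same_card[OF bij_mk3] by (simp add: card_cartesian_product)
  have fI: "finite ?I"
    using bij_betw_finite[OF bij_mk3] finC finJ by simp
  have cK: "card ?K = card ?I" using cI by (simp add: card_cartesian_product)
  have "trace_norm ?I (partial_transpose (app_sites n \<Sigma>) (premeas n d \<Sigma> B \<rho>)) = trace_norm ?K (Dop n d \<Sigma> B \<rho>)"
    by (rule tn_LDR[OF fI fK cK, where L="Lop n \<Sigma> R B" and R="Rop n \<Sigma> R B"])
       (simp_all add: LL[OF B'] RR[OF B'] LDR)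
  also have "\<dots> = (\<Sum>p\<in>cfgs d \<Sigma> \<times> cfgs d \<Sigma>. trace_norm (cfgs d R) (case p of (b,a) \<Rightarrow> block n d \<Sigma> B \<rho> b a))"
    by (rule trace_norm_blockdiag) (use finC finJ in \<open>simp_all add: Dop_eq\<close>)
  also have "\<dots> = (\<Sum>i\<in>cfgs d \<Sigma>. \<Sum>j\<in>cfgs d \<Sigma>. trace_norm (cfgs d R) (block n d \<Sigma> B \<rho> i j))"
    by (simp add: sum.cartesian_product split_beta)
  finally show ?thesis .
qed

end

theorem theorem3:
  fixes n :: nat and d :: "nat \<Rightarrow> nat" and \<Sigma> :: "nat set"
    and \<rho> :: "(nat \<Rightarrow> nat) \<Rightarrow> (nat \<Rightarrow> nat) \<Rightarrow> complex"
  assumes "\<forall>k\<in>{1..n}. 1 \<le> d k"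
    and "is_state (cfgs d {1..n}) \<rho>"
    and "\<Sigma> \<subseteq> {1..n}" and "\<Sigma> \<noteq> {}"
  shows "QN n d \<Sigma> \<rho> =
    (INF B\<in>bases d \<Sigma>.
       ((\<Sum>i\<in>cfgs d \<Sigma>. \<Sum>j\<in>cfgs d \<Sigma>.
           trace_norm (cfgs d ({1..n} - \<Sigma>)) (block n d \<Sigma> B \<rho> i j)) - 1) / 2)"
  unfolding QN_def negativity_def
  by (rule INF_cong[OF refl], rule arg_cong[where f="\<lambda>x. (x - 1) / 2"],
      rule main_tn[OF refl refl assms(3)], assumption)


end
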